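(* Let $R$ be a ring satisfying condition (C): every subring of $Q=Q_{\max}^r(R)$ containing $R$ is flat as a left $R$-module. Let $Q_\alpha$ be the rings of the construction described in the context and $Q^{(\alpha)}$ the rings of Morita's construction starting from $Q$. Then $Q_\alpha=Q^{(\alpha)}$ for every ordinal $\alpha$.
   Context: Rings are associative with unit; modules are right modules. For a hereditary torsion theory with Gabriel filter $\mathcal{E}$ (set of right ideals $I$ with $R/I$ torsion), $R_{\mathcal{E}}=\varinjlim_{I\in\mathcal{E}}\mathrm{Hom}_R(I,R/\mathcal{T}R)$ is its right ring of quotients; for faithful torsion theories it is a subring of $Q_{\max}^r(R)$. For $S\supseteq R$ flat as a left $R$-module, $\tau_S$ is the hereditary torsion theory whose torsion modules are those $M$ with $M\otimes_R S=0$. Construction of $Q_\alpha$: $Q_0=Q_{\max}^r(R)$ (ring of quotients of the Lambek torsion theory, whose filter $\mathcal{E}_0$ is the set of dense right ideals). $\mathcal{E}_{\alpha+1}$ is the Gabriel filter of $\tau_{Q_\alpha}$, namely $\{I: IQ_\alpha=Q_\alpha\}$, and $Q_{\alpha+1}=R_{\mathcal{E}_{\alpha+1}}$. For a limit ordinal $\alpha$, $\mathcal{E}_\alpha=\bigcap_{\beta<\alpha}\mathcal{E}_\beta$ and $Q_\alpha=R_{\mathcal{E}_\alpha}=\bigcap_{\beta<\alpha}Q_\beta$. Morita's construction: for a ring extension $S$ of $R$ and $x\in S$, let $(R:x)=\{r\in R: xr\in R\}$, and $S'=\{s\in S: (R:sr)S=S\text{ for every } r\in R\}$ (a subring of $S$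 containing $R$). Set $Q^{(0)}=Q$, $Q^{(\alpha+1)}=(Q^{(\alpha)})'$, and $Q^{(\alpha)}=\bigcap_{\beta<\alpha}Q^{(\beta)}$ for limit ordinals $\alpha$. *)

theory Defs
  imports Main
begin

text \<open>Convention: the ambient ring type 'a plays the role of Q = Q_max^r(R);
  R is a subring (a set of elements of 'a). Modules are right modules.\<close>

definition subring :: "'a::ring_1 set \<Rightarrow> bool" where
  "subring S \<longleftrightarrow> 1 \<in> S \<and> (\<forall>x\<in>S. \<forall>y\<in>S. x - y \<in> S \<and> x * y \<in> S)"

definition right_ideal :: "'a::ring_1 set \<Rightarrow> 'a set \<Rightarrow> bool" where
  "right_ideal R I \<longleftrightarrow> I \<subseteq> R \<and> 0 \<in> I \<and> (\<forall>x\<in>I. \<forall>y\<in>I. x - y \<in> I)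
     \<and> (\<forall>x\<in>I. \<forall>r\<in>R. x * r \<in> I)"

text \<open>Dense right ideals of R (the Gabriel filter of the Lambek torsion theory).\<close>
definition dense_right_ideal :: "'a::ring_1 set \<Rightarrow> 'a set \<Rightarrow> bool" where
  "dense_right_ideal R I \<longleftrightarrow> right_ideal R I \<and>
     (\<forall>r1\<in>R. \<forall>r2\<in>R. r1 \<noteq> 0 \<longrightarrow> (\<exists>r\<in>R. r1 * r \<noteq> 0 \<and> r2 * r \<in> I))"

text \<open>Q (= UNIV of type 'a) is a maximal right ring of quotients of R
  (Utumi/Lambek characterisation): Q is a rational (dense) extension of R_R,
  and every R-homomorphism from a dense right ideal into R is left
  multiplication by an element of Q.\<close>
definition is_Qmax :: "'a::ring_1 set \<Rightarrow> bool" where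
  "is_Qmax R \<longleftrightarrow> subring R \<and>
     (\<forall>p q. p \<noteq> 0 \<longrightarrow> (\<exists>r\<in>R. p * r \<noteq> 0 \<and> q * r \<in> R)) \<and>
     (\<forall>I f. dense_right_ideal R I \<and> (\<forall>x\<in>I. f x \<in> R) \<and>
            (\<forall>x\<in>I. \<forall>y\<in>I. f (x + y) = f x + f y) \<and>
            (\<forall>x\<in>I. \<forall>r\<in>R. f (x * r) = f x * r)
        \<longrightarrow> (\<exists>q. \<forall>x\<in>I. f x = q * x))"

text \<open>Flatness of S as a left R-module (equational criterion).\<close>
definition flat_left :: "'a::ring_1 set \<Rightarrow> 'a set \<Rightarrow> bool" where
  "flat_left R S \<longleftrightarrow>
     (\<forall>n (r::nat \<Rightarrow> 'a) s. (\<forall>k<n. r k \<in> R \<and> s k \<in> S) \<and> (\<Sum>k<n. r k * s k) = 0 \<longrightarrow>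
        (\<exists>m (a::nat \<Rightarrow> nat \<Rightarrow> 'a) t. (\<forall>j<m. t j \<in> S) \<and> (\<forall>k<n. \<forall>j<m. a k j \<in> R) \<and>
           (\<forall>k<n. s k = (\<Sum>j<m. a k j * t j)) \<and>
           (\<forall>j<m. (\<Sum>k<n. r k * a k j) = 0)))"

definition condition_C :: "'a::ring_1 set \<Rightarrow> bool" where
  "condition_C R \<longleftrightarrow> (\<forall>S. subring S \<and> R \<subseteq> S \<longrightarrow> flat_left R S)"

definition ideal_prod :: "'a::ring_1 set \<Rightarrow> 'a set \<Rightarrow> 'a set" where
  "ideal_prod I S = {x. \<exists>n (i::nat \<Rightarrow> 'a) s. (\<forall>k<n. i k \<in> I \<and> s k \<in> S) \<and> x = (\<Sum>k<n. i k * s k)}"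

definition colon :: "'a::ring_1 set \<Rightarrow> 'a \<Rightarrow> 'a set" where
  "colon R x = {r \<in> R. x * r \<in> R}"

text \<open>R_E for a faithful Gabriel filter E, realised inside Q.\<close>
definition quot_ring :: "'a::ring_1 set \<Rightarrow> 'a set set \<Rightarrow> 'a set" where
  "quot_ring R E = {q. \<exists>I\<in>E. \<forall>x\<in>I. q * x \<in> R}"

definition morita_prime :: "'a::ring_1 set \<Rightarrow> 'a set \<Rightarrow> 'a set" where
  "morita_prime R S = {s \<in> S. \<forall>r\<in>R. ideal_prod (colon R (s * r)) S = S}"

text \<open>Ordinal-indexed positions in a well-ordered index type.\<close>
definition is_least_idx :: "'i::wellorder \<Rightarrow> bool" where
  "is_least_idx a \<longleftrightarrow> (\<forall>b. a \<le> b)"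

definition is_succ_of :: "'i::wellorder \<Rightarrow> 'i \<Rightarrow> bool" where
  "is_succ_of a b \<longleftrightarrow> b < a \<and> (\<forall>c. b < c \<longrightarrow> a \<le> c)"

definition is_limit_idx :: "'i::wellorder \<Rightarrow> bool" where
  "is_limit_idx a \<longleftrightarrow> \<not> is_least_idx a \<and> \<not> (\<exists>b. is_succ_of a b)"

end

theory Submission
  imports Defs
begin


lemma sub_0: "subring S \<Longrightarrow> 0 \<in> S"
  unfolding subring_def by (metis diff_self)
lemma sub_add: "subring S \<Longrightarrow> x \<in> S \<Longrightarrow> y \<in> S \<Longrightarrow> x + y \<in> S"
  using sub_0[of S] unfolding subring_def by (metis diff_0 diff_minus_eq_add)
lemma sub_mult: "subring S \<Longrightarrow> x \<in> S \<Longrightarrow> y \<in> S \<Longrightarrow> x * y \<in> S"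
  unfolding subring_def by blast
lemma sub_diff: "subring S \<Longrightarrow> x \<in> S \<Longrightarrow> y \<in> S \<Longrightarrow> x - y \<in> S"
  unfolding subring_def by blast
lemma sub_neg: "subring S \<Longrightarrow> x \<in> S \<Longrightarrow> - x \<in> S"
  using sub_0[of S] sub_diff[of S 0 x] by simp
lemma sub_sum: "subring S \<Longrightarrow> (\<forall>k<(n::nat). f k \<in> S) \<Longrightarrow> (\<Sum>k<n. f k) \<in> S"
  by (induction n) (auto simp: sub_0 sub_add)

lemma ri_add: "right_ideal R I \<Longrightarrow> x \<in> I \<Longrightarrow> y \<in> I \<Longrightarrow> x + y \<in> I"
  unfolding right_ideal_def by (metis diff_0 diff_minus_eq_add)
lemma ri_sum: "right_ideal R I \<Longrightarrow> (\<forall>k<(n::nat). f k \<in> I) \<Longrightarrow> (\<Sum>k<n. f k) \<in> I"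
  by (induction n) (auto simp: ri_add, auto simp: right_ideal_def)

lemma colon_ri: "subring R \<Longrightarrow> right_ideal R (colon R q)"
  unfolding right_ideal_def colon_def
  by (auto simp: sub_0 sub_diff sub_mult right_diff_distrib simp flip: mult.assoc)

lemma ip_sub: "subring S \<Longrightarrow> I \<subseteq> S \<Longrightarrow> ideal_prod I S \<subseteq> S"
  unfolding ideal_prod_def by (auto intro!: sub_sum sub_mult)
lemma ip_intro: "(\<forall>k<(n::nat). i k \<in> I \<and> s k \<in> S) \<Longrightarrow> x = (\<Sum>k<n. i k * s k) \<Longrightarrow> x \<in> ideal_prod I S"
  unfolding ideal_prod_def by blast
lemma ip_mono: "I \<subseteq> J \<Longrightarrow> ideal_prod I S \<subseteq> ideal_prod J S"
  unfolding ideal_prod_def by blast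
lemma ip_0: "0 \<in> ideal_prod I S"
  unfolding ideal_prod_def by (rule CollectI, rule exI[of _ 0]) auto
lemma ip_add1: assumes "x \<in> ideal_prod I S" "i \<in> I" "s \<in> S"
  shows "x + i * s \<in> ideal_prod I S"
proof -
  obtain n :: nat and ii ss where h: "\<forall>k<n. ii k \<in> I \<and> ss k \<in> S" "x = (\<Sum>k<n. ii k * ss k)"
    using assms(1) unfolding ideal_prod_def by blast
  have "x + i * s = (\<Sum>k<Suc n. (ii(n:=i)) k * (ss(n:=s)) k)"
    using h(2) by (simp add: sum.lessThan_Suc)
  moreover have "\<forall>k<Suc n. (ii(n:=i)) k \<in> I \<and> (ss(n:=s)) k \<in> S"
    using h(1) assms by (simp add: less_Suc_eq)
  ultimately show ?thesis by (intro ip_intro[of "Suc n" "ii(n:=i)" I "ss(n:=s)" S]) auto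
qed
lemma ip_elem: "i \<in> I \<Longrightarrow> s \<in> S \<Longrightarrow> i * s \<in> ideal_prod I S"
  using ip_add1[OF ip_0] by (metis add_0)
lemma ip_add: assumes "x \<in> ideal_prod I S" "y \<in> ideal_prod I S"
  shows "x + y \<in> ideal_prod I S"
proof -
  obtain n :: nat and ii ss where h: "\<forall>k<n. ii k \<in> I \<and> ss k \<in> S" "y = (\<Sum>k<n. ii k * ss k)"
    using assms(2) unfolding ideal_prod_def by blast
  have "\<forall>m\<le>n. x + (\<Sum>k<m. ii k * ss k) \<in> ideal_prod I S"
  proof (intro allI impI)
    fix m assume "m \<le> n" then show "x + (\<Sum>k<m. ii k * ss k) \<in> ideal_prod I S"
    proof (induction m)
      case 0 then show ?case using assms(1) by simp
    next
      case (Suc m)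
      then have "x + (\<Sum>k<m. ii k * ss k) + ii m * ss m \<in> ideal_prod I S"
        using h(1) by (intro ip_add1) auto
      then show ?case by (simp add: add.assoc)
    qed
  qed
  then show ?thesis using h(2) by simp
qed
lemma ip_sum: "(\<forall>k<(n::nat). f k \<in> ideal_prod I S) \<Longrightarrow> (\<Sum>k<n. f k) \<in> ideal_prod I S"
  by (induction n) (auto simp: ip_0 ip_add)
lemma ip_rmult: assumes "subring S" "x \<in> ideal_prod I S" "t \<in> S"
  shows "x * t \<in> ideal_prod I S"
proof -
  obtain n :: nat and ii ss where h: "\<forall>k<n. ii k \<in> I \<and> ss k \<in> S" "x = (\<Sum>k<n. ii k * ss k)"
    using assms(2) unfolding ideal_prod_def by blast
  have "x * t = (\<Sum>k<n. ii k * (ss k * t))"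
    using h(2) by (simp add: sum_distrib_right mult.assoc)
  moreover have "\<forall>k<n. ii k \<in> I \<and> ss k * t \<in> S" using h(1) assms by (simp add: sub_mult)
  ultimately show ?thesis by (intro ip_intro[of n ii I "\<lambda>k. ss k * t" S]) auto
qed
lemma ip_one: assumes "subring S" "1 \<in> ideal_prod I S" shows "S \<subseteq> ideal_prod I S"
proof
  fix s assume "s \<in> S"
  then have "1 * s \<in> ideal_prod I S" using ip_rmult assms by blast
  then show "s \<in> ideal_prod I S" by simp
qed
lemma ip_eq: "subring S \<Longrightarrow> I \<subseteq> S \<Longrightarrow> ideal_prod I S = S \<longleftrightarrow> 1 \<in> ideal_prod I S"
proof
  assume "subring S" "I \<subseteq> S" "ideal_prod I S = S"
  then show "1 \<in> ideal_prod I S" unfolding subring_def by simp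
next
  assume "subring S" "I \<subseteq> S" "1 \<in> ideal_prod I S"
  then show "ideal_prod I S = S" using ip_one ip_sub by (intro subset_antisym)
qed

lemma flat_key:
  assumes S: "subring S" and RS: "R \<subseteq> S" and R: "subring R" and fl: "flat_left R S"
    and I: "right_ideal R I" and one: "1 \<in> ideal_prod I S" and r: "r \<in> R"
  shows "1 \<in> ideal_prod {x\<in>R. r * x \<in> I} S"
proof -
  have "r \<in> ideal_prod I S" using ip_one[OF S one] RS r by blast
  then obtain n :: nat and ii ss where h: "\<forall>k<n. ii k \<in> I \<and> ss k \<in> S" "r = (\<Sum>k<n. ii k * ss k)"
    unfolding ideal_prod_def by blast
  define rr where "rr k = (if k = 0 then r else - ii (k - 1))" for k
  define sv where "sv k = (if k = 0 then 1 else ss (k - 1))" for k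
  have IR: "I \<subseteq> R" using I unfolding right_ideal_def by blast
  have "\<forall>k<Suc n. rr k \<in> R \<and> sv k \<in> S"
  proof (intro allI impI)
    fix k assume k: "k < Suc n"
    show "rr k \<in> R \<and> sv k \<in> S"
    proof (cases k)
      case 0 then show ?thesis using r S by (simp add: rr_def sv_def subring_def)
    next
      case (Suc k')
      then have "ii k' \<in> R" "ss k' \<in> S" using h(1) k IR by auto
      then show ?thesis using Suc sub_neg[OF R] by (simp add: rr_def sv_def)
    qed
  qed
  moreover have "(\<Sum>k<Suc n. rr k * sv k) = 0"
    unfolding sum.lessThan_Suc_shift using h(2) by (simp add: rr_def sv_def sum_negf)
  ultimately have "\<exists>m (a::nat \<Rightarrow> nat \<Rightarrow> 'a) t. (\<forall>j<m. t j \<in> S) \<and> (\<forall>k<Suc n. \<forall>j<m. a k j \<in> R) \<and>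
           (\<forall>k<Suc n. sv k = (\<Sum>j<m. a k j * t j)) \<and>
           (\<forall>j<m. (\<Sum>k<Suc n. rr k * a k j) = 0)"
    using fl[unfolded flat_left_def, rule_format, of "Suc n" rr sv] by blast
  then obtain m :: nat and a t where ft: "\<forall>j<m. t j \<in> S" "\<forall>k<Suc n. \<forall>j<m. a k j \<in> R"
    "\<forall>k<Suc n. sv k = (\<Sum>j<m. a k j * t j)" "\<forall>j<m. (\<Sum>k<Suc n. rr k * a k j) = 0"
    by blast
  have "sv 0 = (\<Sum>j<m. a 0 j * t j)" using ft(3) by blast
  then have one': "1 = (\<Sum>j<m. a 0 j * t j)" by (simp only: sv_def if_True refl)
  have "\<forall>j<m. a 0 j \<in> {x\<in>R. r * x \<in> I}"
  proof (intro allI impI)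
    fix j assume j: "j < m"
    have "r * a 0 j + (\<Sum>k<n. - ii k * a (Suc k) j) = 0"
      using ft(4) j unfolding sum.lessThan_Suc_shift by (simp add: rr_def)
    moreover have "(\<Sum>k<n. - ii k * a (Suc k) j) = - (\<Sum>k<n. ii k * a (Suc k) j)"
      by (simp add: sum_negf)
    ultimately have "r * a 0 j - (\<Sum>k<n. ii k * a (Suc k) j) = 0" by simp
    then have "r * a 0 j = (\<Sum>k<n. ii k * a (Suc k) j)" by simp
    moreover have "(\<Sum>k<n. ii k * a (Suc k) j) \<in> I"
      using h(1) ft(2) j I by (intro ri_sum) (auto simp: right_ideal_def)
    ultimately show "a 0 j \<in> {x\<in>R. r * x \<in> I}" using ft(2) j by auto
  qed
  then have "\<forall>k<m. a 0 k \<in> {x\<in>R. r * x \<in> I} \<and> t k \<in> S" using ft(1) by blast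
  then show ?thesis using ip_intro[of m "\<lambda>j. a 0 j" _ t S 1] one' by blast
qed

lemma filter_G:
  assumes S: "subring S" and J: "right_ideal R J" and one: "1 \<in> ideal_prod J S"
    and H: "\<forall>j\<in>J. \<exists>L. 1 \<in> ideal_prod L S \<and> (\<forall>x\<in>L. j * x \<in> K)"
  shows "1 \<in> ideal_prod K S"
proof -
  have jK: "j \<in> ideal_prod K S" if "j \<in> J" for j
  proof -
    have "\<exists>L. 1 \<in> ideal_prod L S \<and> (\<forall>x\<in>L. j * x \<in> K)" using H that by (rule bspec)
    then obtain L where L: "1 \<in> ideal_prod L S" "\<forall>x\<in>L. j * x \<in> K" by (elim exE conjE)
    then obtain n :: nat and ii ss where h: "\<forall>k<n. ii k \<in> L \<and> ss k \<in> S" "1 = (\<Sum>k<n. ii k * ss k)"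
      unfolding ideal_prod_def by blast
    have "j = j * (\<Sum>k<n. ii k * ss k)" unfolding h(2)[symmetric] by simp
    also have "\<dots> = (\<Sum>k<n. (j * ii k) * ss k)" by (simp add: sum_distrib_left mult.assoc)
    finally have "j = (\<Sum>k<n. (j * ii k) * ss k)" .
    moreover have "\<forall>k<n. j * ii k \<in> K \<and> ss k \<in> S" using h(1) L(2) by blast
    ultimately show ?thesis using ip_intro[of n "\<lambda>k. j * ii k" K ss S j] by blast
  qed
  obtain n :: nat and ii ss where h: "\<forall>k<n. ii k \<in> J \<and> ss k \<in> S" "1 = (\<Sum>k<n. ii k * ss k)"
    using one unfolding ideal_prod_def by blast
  show ?thesis unfolding h(2) using h(1) jK ip_rmult[OF S] by (intro ip_sum) blast
qed



definition inv_at where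
  "inv_at R EA QA \<longleftrightarrow> (\<forall>I\<in>EA. right_ideal R I) \<and>
     (\<forall>I J. I \<in> EA \<longrightarrow> right_ideal R J \<longrightarrow> I \<subseteq> J \<longrightarrow> J \<in> EA) \<and>
     (\<forall>q. q \<in> QA \<longleftrightarrow> colon R q \<in> EA) \<and> subring QA \<and> R \<subseteq> QA"

lemma ri_sub: "right_ideal R I \<Longrightarrow> I \<subseteq> R"
  unfolding right_ideal_def by blast

lemma colon_mono: "I \<subseteq> R \<Longrightarrow> (\<forall>x\<in>I. q * x \<in> R) \<Longrightarrow> I \<subseteq> colon R q"
  unfolding colon_def by blast

lemma least_step:
  assumes Q: "is_Qmax R"
  shows "inv_at R {I. dense_right_ideal R I} UNIV"
proof -
  have R: "subring R" using Q unfolding is_Qmax_def by blast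
  have "dense_right_ideal R (colon R q)" for q
    unfolding dense_right_ideal_def
  proof (intro conjI ballI impI)
    show "right_ideal R (colon R q)" using colon_ri[OF R] .
    fix r1 r2 assume h: "r1 \<in> R" "r2 \<in> R" "r1 \<noteq> 0"
    then obtain r where "r \<in> R" "r1 * r \<noteq> 0" "q * r2 * r \<in> R"
      using Q unfolding is_Qmax_def by blast
    then show "\<exists>r\<in>R. r1 * r \<noteq> 0 \<and> r2 * r \<in> colon R q"
      using h sub_mult[OF R] by (auto simp: colon_def mult.assoc)
  qed
  moreover have "\<forall>I J. dense_right_ideal R I \<longrightarrow> right_ideal R J \<longrightarrow> I \<subseteq> J \<longrightarrow> dense_right_ideal R J"
    unfolding dense_right_ideal_def by blast
  moreover have "\<forall>I\<in>{I. dense_right_ideal R I}. right_ideal R I"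
    unfolding dense_right_ideal_def by blast
  moreover have "subring (UNIV::'a set)" unfolding subring_def by blast
  ultimately show ?thesis unfolding inv_at_def by blast
qed

lemma succ_step:
  assumes R: "subring R" and S: "subring S" and RS: "R \<subseteq> S" and fl: "flat_left R S"
    and EA: "EA = {I. right_ideal R I \<and> ideal_prod I S = S}" and QA: "QA = quot_ring R EA"
  shows "inv_at R EA QA \<and> QA = morita_prime R S"
proof -
  have EA': "I \<in> EA \<longleftrightarrow> right_ideal R I \<and> 1 \<in> ideal_prod I S" for I
  proof -
    have "right_ideal R I \<Longrightarrow> I \<subseteq> S" using ri_sub RS by blast
    then show ?thesis using EA ip_eq[OF S, of I] by auto
  qed
  have up: "\<forall>I J. I \<in> EA \<longrightarrow> right_ideal R J \<longrightarrow> I \<subseteq> J \<longrightarrow> J \<in> EA"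
    by (meson EA' ip_mono subsetD)
  have memQ: "q \<in> QA \<longleftrightarrow> colon R q \<in> EA" for q
  proof
    assume "q \<in> QA"
    then obtain I where I: "I \<in> EA" "\<forall>x\<in>I. q * x \<in> R" using QA unfolding quot_ring_def by blast
    then have "I \<subseteq> colon R q" using colon_mono EA' ri_sub by metis
    then show "colon R q \<in> EA" using up colon_ri[OF R] I(1) by blast
  next
    assume h: "colon R q \<in> EA"
    have "\<forall>x\<in>colon R q. q * x \<in> R" by (simp add: colon_def)
    then show "q \<in> QA" using h unfolding QA quot_ring_def by blast
  qed
  have colR: "colon R r = R" if "r \<in> R" for r
    using that sub_mult[OF R] unfolding colon_def by auto
  have riR: "right_ideal R R" using R sub_0[OF R] unfolding right_ideal_def subring_def by blast
  have REA: "R \<in> EA" using EA' riR ip_elem[of 1 R 1 S] R S unfolding subring_def by auto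
  have RQ: "R \<subseteq> QA" using memQ colR REA by auto
  have quot_key: "1 \<in> ideal_prod {x\<in>R. r * x \<in> I} S" if "I \<in> EA" "r \<in> R" for I r
    using flat_key[OF S RS R fl] that EA' by blast
  have subQ: "subring QA"
    unfolding subring_def
  proof (intro conjI ballI)
    show "1 \<in> QA" using RQ R unfolding subring_def by blast
    fix x y assume x: "x \<in> QA" and y: "y \<in> QA"
    let ?I = "colon R x" and ?J = "colon R y"
    have I: "?I \<in> EA" and J: "?J \<in> EA" using x y memQ by auto
    have "1 \<in> ideal_prod (?I \<inter> ?J) S"
    proof (rule filter_G[OF S _ _])
      show "right_ideal R ?J" "1 \<in> ideal_prod ?J S" using J EA' by auto
      show "\<forall>j\<in>?J. \<exists>L. 1 \<in> ideal_prod L S \<and> (\<forall>z\<in>L. j * z \<in> ?I \<inter> ?J)"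
      proof
        fix j assume j: "j \<in> ?J"
        have "\<forall>z\<in>{z\<in>R. j * z \<in> ?I}. j * z \<in> ?I \<inter> ?J"
          using j colon_ri[OF R, of y] unfolding right_ideal_def by blast
        then show "\<exists>L. 1 \<in> ideal_prod L S \<and> (\<forall>z\<in>L. j * z \<in> ?I \<inter> ?J)"
          using quot_key[OF I] j unfolding colon_def by blast
      qed
    qed
    moreover have "?I \<inter> ?J \<subseteq> colon R (x - y)"
      unfolding colon_def using sub_diff[OF R] by (auto simp: left_diff_distrib)
    ultimately have "1 \<in> ideal_prod (colon R (x - y)) S" using ip_mono by blast
    then show "x - y \<in> QA" using memQ EA' colon_ri[OF R] by blast
    let ?K = "{z\<in>?J. y * z \<in> ?I}"
    have "1 \<in> ideal_prod ?K S"
    proof (rule filter_G[OF S _ _])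
      show "right_ideal R ?J" "1 \<in> ideal_prod ?J S" using J EA' by auto
      show "\<forall>j\<in>?J. \<exists>L. 1 \<in> ideal_prod L S \<and> (\<forall>z\<in>L. j * z \<in> ?K)"
      proof
        fix j assume j: "j \<in> ?J"
        have yj: "y * j \<in> R" using j unfolding colon_def by blast
        have "\<forall>z\<in>{z\<in>R. y * j * z \<in> ?I}. j * z \<in> ?K"
          using j colon_ri[OF R, of y] unfolding right_ideal_def by (auto simp: mult.assoc)
        then show "\<exists>L. 1 \<in> ideal_prod L S \<and> (\<forall>z\<in>L. j * z \<in> ?K)"
          using quot_key[OF I yj] by blast
      qed
    qed
    moreover have "?K \<subseteq> colon R (x * y)"
      unfolding colon_def by (auto simp: mult.assoc)
    ultimately have "1 \<in> ideal_prod (colon R (x * y)) S" using ip_mono by blast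
    then show "x * y \<in> QA" using memQ EA' colon_ri[OF R] by blast
  qed
  have morita: "QA = morita_prime R S"
  proof
    show "QA \<subseteq> morita_prime R S"
    proof
      fix q assume q: "q \<in> QA"
      let ?I = "colon R q"
      have I: "?I \<in> EA" using q memQ by auto
      then obtain n :: nat and ii ss where h: "\<forall>k<n. ii k \<in> ?I \<and> ss k \<in> S" "1 = (\<Sum>k<n. ii k * ss k)"
        using EA' unfolding ideal_prod_def by blast
      have "q = q * (\<Sum>k<n. ii k * ss k)" unfolding h(2)[symmetric] by simp
      also have "\<dots> = (\<Sum>k<n. (q * ii k) * ss k)" by (simp add: sum_distrib_left mult.assoc)
      finally have qeq: "q = (\<Sum>k<n. (q * ii k) * ss k)" .
      have "\<forall>k<n. (q * ii k) * ss k \<in> S"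
      proof (intro allI impI)
        fix k assume "k < n"
        then have "q * ii k \<in> S" "ss k \<in> S" using h(1) RS by (auto simp: colon_def)
        then show "(q * ii k) * ss k \<in> S" by (rule sub_mult[OF S])
      qed
      then have Sf: "(\<Sum>k<n. (q * ii k) * ss k) \<in> S" by (rule sub_sum[OF S])
      have qS: "q \<in> S" using Sf qeq by metis
      have "ideal_prod (colon R (q * r)) S = S" if r: "r \<in> R" for r
      proof -
        have "{x\<in>R. r * x \<in> ?I} \<subseteq> colon R (q * r)"
          unfolding colon_def by (auto simp: mult.assoc)
        then have "ideal_prod {x\<in>R. r * x \<in> ?I} S \<subseteq> ideal_prod (colon R (q * r)) S"
          by (rule ip_mono)
        then have "1 \<in> ideal_prod (colon R (q * r)) S"
          using quot_key[OF I r] by (rule subsetD)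
        moreover have "colon R (q * r) \<subseteq> S" using RS unfolding colon_def by blast
        ultimately show ?thesis using ip_eq[OF S, of "colon R (q * r)"] by simp
      qed
      then have "\<forall>r\<in>R. ideal_prod (colon R (q * r)) S = S" by blast
      then show "q \<in> morita_prime R S" using qS unfolding morita_prime_def by simp
    qed
  next
    show "morita_prime R S \<subseteq> QA"
    proof
      fix s assume "s \<in> morita_prime R S"
      then have "\<forall>r\<in>R. ideal_prod (colon R (s * r)) S = S" unfolding morita_prime_def by simp
      moreover have "1 \<in> R" using R unfolding subring_def by simp
      ultimately have "ideal_prod (colon R (s * 1)) S = S" by (rule bspec)
      then have "colon R s \<in> EA" using EA colon_ri[OF R] by simp
      then show "s \<in> QA" using memQ by simp
    qed
  qed
  have ri: "\<forall>I\<in>EA. right_ideal R I" using EA by simp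
  have "inv_at R EA QA" unfolding inv_at_def
    by (intro conjI ri up subQ RQ allI memQ)
  then show ?thesis using morita by (intro conjI)
qed

lemma inv_atD:
  assumes "inv_at R EA QA"
  shows "\<And>I. I \<in> EA \<Longrightarrow> right_ideal R I"
    and "\<And>I J. I \<in> EA \<Longrightarrow> right_ideal R J \<Longrightarrow> I \<subseteq> J \<Longrightarrow> J \<in> EA"
    and "\<And>q. q \<in> QA \<longleftrightarrow> colon R q \<in> EA"
    and "subring QA" and "R \<subseteq> QA"
  using assms unfolding inv_at_def by blast+

theorem proposition3p3:
  fixes R :: "'a::ring_1 set"
    and E :: "'i::wellorder \<Rightarrow> 'a set set"
    and Qa :: "'i \<Rightarrow> 'a set"
    and Qm :: "'i \<Rightarrow> 'a set"
  assumes Qmax: "is_Qmax R"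
    and C: "condition_C R"
    and E0: "\<And>a. is_least_idx a \<Longrightarrow> E a = {I. dense_right_ideal R I} \<and> Qa a = UNIV"
    and Esuc: "\<And>a b. is_succ_of a b \<Longrightarrow>
         E a = {I. right_ideal R I \<and> ideal_prod I (Qa b) = Qa b} \<and> Qa a = quot_ring R (E a)"
    and Elim: "\<And>a. is_limit_idx a \<Longrightarrow>
         E a = (\<Inter>b\<in>{..<a}. E b) \<and> Qa a = quot_ring R (E a)"
    and M0: "\<And>a. is_least_idx a \<Longrightarrow> Qm a = UNIV"
    and Msuc: "\<And>a b. is_succ_of a b \<Longrightarrow> Qm a = morita_prime R (Qm b)"
    and Mlim: "\<And>a. is_limit_idx a \<Longrightarrow> Qm a = (\<Inter>b\<in>{..<a}. Qm b)"
  shows "\<forall>a. Qa a = Qm a"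
proof -
  have R: "subring R" using Qmax by (simp add: is_Qmax_def)
  have inv: "inv_at R (E a) (Qa a) \<and> Qa a = Qm a" for a
  proof (induction a rule: less_induct)
    case (less a)
    consider (L) "is_least_idx a" | (S) b where "is_succ_of a b" | (M) "is_limit_idx a"
      unfolding is_limit_idx_def by blast
    then show ?case
    proof cases
      case L
      then have "E a = {I. dense_right_ideal R I}" "Qa a = UNIV" using E0 by auto
      moreover have "Qm a = UNIV" using M0 L by blast
      ultimately show ?thesis using least_step[OF Qmax] by simp
    next
      case (S b)
      have ba: "b < a" using S unfolding is_succ_of_def by blast
      from less.IH[OF ba] have ib: "inv_at R (E b) (Qa b)" and eb: "Qa b = Qm b" by auto
      have subS: "subring (Qa b)" and RS: "R \<subseteq> Qa b" using inv_atD[OF ib] by auto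
      have fl: "flat_left R (Qa b)" using C subS RS unfolding condition_C_def by blast
      have EA: "E a = {I. right_ideal R I \<and> ideal_prod I (Qa b) = Qa b}"
        and QA: "Qa a = quot_ring R (E a)" using Esuc[OF S] by auto
      from succ_step[OF R subS RS fl EA QA]
      have "inv_at R (E a) (Qa a)" "Qa a = morita_prime R (Qa b)" by auto
      then show ?thesis using Msuc[OF S] eb by simp
    next
      case M
      have EA: "E a = (\<Inter>b\<in>{..<a}. E b)" and QA: "Qa a = quot_ring R (E a)"
        using Elim[OF M] by auto
      obtain b0 where b0: "b0 < a"
        using M unfolding is_limit_idx_def is_least_idx_def by (meson not_le)
      have IH: "inv_at R (E b) (Qa b)" "Qa b = Qm b" if "b < a" for b
        using less.IH[OF that] by auto
      have ri: "right_ideal R I" if "I \<in> E a" for I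
        using that EA inv_atD(1)[OF IH(1)[OF b0]] b0 by blast
      have up: "J \<in> E a" if "I \<in> E a" "right_ideal R J" "I \<subseteq> J" for I J
      proof -
        have "J \<in> E b" if b: "b < a" for b
          using inv_atD(2)[OF IH(1)[OF b]] \<open>I \<in> E a\<close> EA b \<open>right_ideal R J\<close> \<open>I \<subseteq> J\<close> by blast
        then show ?thesis using EA by blast
      qed
      have memQ: "q \<in> Qa a \<longleftrightarrow> colon R q \<in> E a" for q
      proof
        assume "q \<in> Qa a"
        then obtain I where I: "I \<in> E a" "\<forall>x\<in>I. q * x \<in> R"
          using QA unfolding quot_ring_def by blast
        have "I \<subseteq> colon R q" using colon_mono ri_sub[OF ri[OF I(1)]] I(2) by blast
        then show "colon R q \<in> E a" using up colon_ri[OF R] I(1) by blast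
      next
        assume h: "colon R q \<in> E a"
        have "\<forall>x\<in>colon R q. q * x \<in> R" by (simp add: colon_def)
        then show "q \<in> Qa a" using h unfolding QA quot_ring_def by blast
      qed
      have QAint: "Qa a = (\<Inter>b\<in>{..<a}. Qa b)"
      proof -
        have "q \<in> Qa a \<longleftrightarrow> (\<forall>b<a. q \<in> Qa b)" for q
          using memQ EA inv_atD(3)[OF IH(1)] by auto
        then show ?thesis by auto
      qed
      then have eqm: "Qa a = Qm a" using Mlim[OF M] IH(2) by auto
      have subQ: "subring (Qa a)"
        using QAint inv_atD(4)[OF IH(1)] unfolding subring_def by auto
      have RQ: "R \<subseteq> Qa a" using QAint inv_atD(5)[OF IH(1)] by auto
      have "inv_at R (E a) (Qa a)" unfolding inv_at_def
        using ri up memQ subQ RQ by blast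
      then show ?thesis using eqm by blast
    qed
  qed
  then show ?thesis by blast
qed

end
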